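(* Let $K>0$, $S=1/K$, and let $\theta:[S,\infty)\to[0,\infty)$ satisfy $\theta(s)>0$ for every $s>S$. Let $\Delta t,\Delta N>0$ and consider the update $$X(t+\Delta t,N)=X(t,N)+\Delta t\,\theta\big(D(t,N)\big),$$ where the spacing estimate $D(t,N)$ (approximating $-X_N$) is one of the following non-anisotropic discretizations: (a) forward difference $D(t,N)=\frac{X(t,N)-X(t,N+\Delta N)}{\Delta N}$; (b) arithmetic central difference $D(t,N)=\frac{X(t,N-\Delta N)-X(t,N+\Delta N)}{2\Delta N}$; (c) harmonic central difference $D(t,N)=\dfrac{2}{\frac{\Delta N}{X(t,N)-X(t,N+\Delta N)}+\frac{\Delta N}{X(t,N-\Delta N)-X(t,N)}}$. Then in each case the model is not collision-free: there exist positions at time $t$ with $X(t,N-\Delta N)-X(t,N)=S\Delta N$ and $X(t,N)-X(t,N+\Delta N)>S\Delta N$, with the leader stopped ($X(t+\Delta t,N-\Delta N)=X(t,N-\Delta N)$), such that $X(t+\Delta t,N-\Delta N)-X(t+\Delta t,N)<S\Delta N$.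
   Context: $X(t,N)$ is the location at time $t$ of vehicle $N$; vehicle $N-\Delta N$ is the leader and vehicle $N+\Delta N$ the follower of vehicle $N$. $\theta$ is the speed-spacing relation, $K$ the jam density and $S$ the jam spacing. A model is collision-free if spacings $X(t,N-\Delta N)-X(t,N)$ never fall below $S\Delta N$. *)

theory Defs
  imports Complex_Main
begin

text \<open>Trajectories: X t N is the position at time t of vehicle N.
  Vehicle N - dN is the leader, N + dN the follower.\<close>

datatype scheme = Forward | ArithCentral | HarmCentral

definition spacing_est :: "scheme \<Rightarrow> (real \<Rightarrow> real \<Rightarrow> real) \<Rightarrow> real \<Rightarrow> real \<Rightarrow> real \<Rightarrow> real" where
  "spacing_est sc X t N dN =
     (case sc of
        Forward \<Rightarrow> (X t N - X t (N + dN)) / dN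
      | ArithCentral \<Rightarrow> (X t (N - dN) - X t (N + dN)) / (2 * dN)
      | HarmCentral \<Rightarrow> 2 / (dN / (X t N - X t (N + dN)) + dN / (X t (N - dN) - X t N)))"

end

theory Submission
  imports Defs
begin

theorem theorem4p4:
  fixes K S dt dN t N :: real and \<theta> :: "real \<Rightarrow> real" and sc :: scheme
  assumes "K > 0" and "S = 1 / K"
    and "\<forall>s\<ge>S. \<theta> s \<ge> 0"
    and "\<forall>s>S. \<theta> s > 0"
    and "dt > 0" and "dN > 0"
  shows "\<exists>X :: real \<Rightarrow> real \<Rightarrow> real.
           X (t + dt) N = X t N + dt * \<theta> (spacing_est sc X t N dN)
         \<and> X t (N - dN) - X t N = S * dN
         \<and> X t N - X t (N + dN) > S * dN
         \<and> X (t + dt) (N - dN) = X t (N - dN)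
         \<and> X (t + dt) (N - dN) - X (t + dt) N < S * dN"
proof -
  have S0: "S > 0" using assms by simp
  define d where "d = (case sc of Forward \<Rightarrow> 2*S | ArithCentral \<Rightarrow> 3/2*S | HarmCentral \<Rightarrow> 4/3*S)"
  have dS: "d > S" using S0 by (cases sc) (auto simp: d_def)
  have th: "\<theta> d > 0" using dS assms(4) by blast
  define X where "X = (\<lambda>\<tau> n. if \<tau> = t then (if n = N - dN then 0 else if n = N then - S*dN else - 3*S*dN)
        else (if n = N - dN then 0 else - S*dN + dt * \<theta> d))"
  have n1: "N - dN \<noteq> N" "N + dN \<noteq> N" "N + dN \<noteq> N - dN" "t + dt \<noteq> t" using assms by auto
  have est: "spacing_est sc X t N dN = d"
    using n1 S0 assms(6) by (cases sc) (auto simp: spacing_est_def X_def d_def field_simps)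
  show ?thesis
    apply (rule exI[of _ X])
    using n1 S0 assms(5,6) th est by (auto simp: X_def)
qed

end
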